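(* Let $R$ be a P$v$MD and let $I$ be a proper $t$-ideal of $R$. If each minimal prime of $I$ is the radical of a $v$-finite divisorial ideal, then $I$ has only finitely many minimal ($t$-)primes.
   Context: $R$ is an integral domain with quotient field $K\neq R$. For nonzero $R$-submodules $A,B$ of $K$, $(A:B)=\{x\in K: xB\subseteq A\}$. For a nonzero fractional ideal $I$, $I_v=(R:(R:I))$ and $I_t=\bigcup\{J_v: J\subseteq I \text{ nonzero finitely generated}\}$. $I$ is divisorial if $I=I_v$ and a $t$-ideal if $I=I_t$; a $v$-finite divisorial ideal is an ideal of the form $J_v$ with $J$ finitely generated. A $t$-prime is a prime $t$-ideal; a $t$-maximal ideal is an ideal maximal among proper $t$-ideals. $R$ is a P$v$MD if $R_M$ is a valuation domain for every $t$-maximal ideal $M$. *)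

theory Defs
  imports "HOL-Computational_Algebra.Fraction_Field"
begin

text \<open>The integral domain R is the type 'a (class idom); its quotient field K is 'a fract.
  R is embedded into K via emb r = Fract r 1.\<close>

definition emb :: "'a::idom \<Rightarrow> 'a fract" where
  "emb r = Fract r 1"

definition Rset :: "'a::idom fract set" where
  "Rset = range emb"

definition colon :: "'a::idom fract set \<Rightarrow> 'a fract set \<Rightarrow> 'a fract set" where
  "colon A B = {x. \<forall>b\<in>B. x * b \<in> A}"

text \<open>v-operation: I_v = (R : (R : I)).  Since (R : S) = (R : RS), the v-closure of a
  finitely generated ideal J = RF equals vcl F.\<close>
definition vcl :: "'a::idom fract set \<Rightarrow> 'a fract set" where
  "vcl I = colon Rset (colon Rset I)"

text \<open>t-operation: union of J_v over nonzero finitely generated J \<subseteq> I (J = R F, F finite).\<close>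
definition tcl :: "'a::idom fract set \<Rightarrow> 'a fract set" where
  "tcl I = \<Union>{vcl F | F. finite F \<and> F \<subseteq> I \<and> F \<noteq> {} \<and> F \<noteq> {0}}"

definition is_ideal :: "'a::idom set \<Rightarrow> bool" where
  "is_ideal I \<longleftrightarrow> 0 \<in> I \<and> (\<forall>x\<in>I. \<forall>y\<in>I. x + y \<in> I) \<and> (\<forall>r x. x \<in> I \<longrightarrow> r * x \<in> I)"

definition is_prime_ideal :: "'a::idom set \<Rightarrow> bool" where
  "is_prime_ideal P \<longleftrightarrow> is_ideal P \<and> P \<noteq> UNIV \<and> (\<forall>a b. a * b \<in> P \<longrightarrow> a \<in> P \<or> b \<in> P)"

definition is_t_ideal :: "'a::idom set \<Rightarrow> bool" where
  "is_t_ideal I \<longleftrightarrow> is_ideal I \<and> I \<noteq> {0} \<and> tcl (emb ` I) = emb ` I"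

definition is_t_maximal :: "'a::idom set \<Rightarrow> bool" where
  "is_t_maximal M \<longleftrightarrow> is_t_ideal M \<and> M \<noteq> UNIV \<and>
     (\<forall>N. is_t_ideal N \<and> N \<noteq> UNIV \<and> M \<subseteq> N \<longrightarrow> N = M)"

definition localization :: "'a::idom set \<Rightarrow> 'a fract set" where
  "localization P = {Fract a s | a s. s \<notin> P}"

text \<open>A domain D with quotient field K is a valuation domain iff for all nonzero x in K,
  x \<in> D or x\<inverse> \<in> D.\<close>
definition valuation_subring :: "'a::idom fract set \<Rightarrow> bool" where
  "valuation_subring D \<longleftrightarrow> (\<forall>x. x \<noteq> 0 \<longrightarrow> x \<in> D \<or> inverse x \<in> D)"

definition PvMD :: "'a::idom itself \<Rightarrow> bool" where
  "PvMD _ \<longleftrightarrow> (\<forall>M::'a set. is_t_maximal M \<longrightarrow> valuation_subring (localization M))"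

definition radical :: "'a::idom set \<Rightarrow> 'a set" where
  "radical J = {x. \<exists>n. x ^ n \<in> J}"

text \<open>P is the radical of a v-finite divisorial ideal (RF)_v, F a finite subset of R
  generating a nonzero ideal; (RF)_v \<subseteq> R automatically, and is identified with its
  preimage in R.\<close>
definition rad_of_v_finite :: "'a::idom set \<Rightarrow> bool" where
  "rad_of_v_finite P \<longleftrightarrow> (\<exists>F. finite F \<and> F \<noteq> {} \<and> F \<noteq> {0} \<and>
      P = radical (emb -` vcl (emb ` F)))"

definition minimal_primes :: "'a::idom set \<Rightarrow> 'a set set" where
  "minimal_primes I = {P. is_prime_ideal P \<and> I \<subseteq> P \<and>
      (\<forall>Q. is_prime_ideal Q \<and> I \<subseteq> Q \<and> Q \<subseteq> P \<longrightarrow> Q = P)}"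

end

theory Submission
  imports Defs
begin

lemma emb_mult: "emb (a * b) = emb a * emb b" by (simp add: emb_def)
lemma emb_add: "emb (a + b) = emb a + emb b" by (simp add: emb_def)
lemma emb_0[simp]: "emb 0 = 0" by (simp add: emb_def fract_collapse)
lemma emb_1[simp]: "emb 1 = 1" by (simp add: emb_def fract_collapse)
lemma emb_inj: "emb a = emb b \<longleftrightarrow> a = b" by (simp add: emb_def eq_fract)
lemma emb_eq0[simp]: "emb a = 0 \<longleftrightarrow> a = 0" using emb_inj[of a 0] by simp
lemma emb_pow: "emb (a ^ n) = emb a ^ n" by (induct n) (simp_all add: emb_mult)

lemma Rset_mult: "x \<in> Rset \<Longrightarrow> y \<in> Rset \<Longrightarrow> x * y \<in> Rset"
  unfolding Rset_def by (auto simp: emb_mult[symmetric])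
lemma Rset_add: "x \<in> Rset \<Longrightarrow> y \<in> Rset \<Longrightarrow> x + y \<in> Rset"
  unfolding Rset_def by (auto simp: emb_add[symmetric])
lemma Rset_0[simp]: "0 \<in> Rset" unfolding Rset_def by (metis emb_0 rangeI)
lemma Rset_1[simp]: "1 \<in> Rset" unfolding Rset_def by (metis emb_1 rangeI)
lemma Rset_emb[simp]: "emb r \<in> Rset" unfolding Rset_def by simp

lemma colon_anti: "A \<subseteq> B \<Longrightarrow> colon C B \<subseteq> colon C A" unfolding colon_def by auto
lemma vcl_mono: "A \<subseteq> B \<Longrightarrow> vcl A \<subseteq> vcl B" unfolding vcl_def by (intro colon_anti) 
lemma vcl_ext: "A \<subseteq> vcl A" unfolding vcl_def colon_def by (auto simp: mult.commute)
lemma colon_vcl: "colon Rset B \<subseteq> colon Rset (vcl B)"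
  unfolding vcl_def colon_def by (auto simp: mult.commute)
lemma vcl_sub: "A \<subseteq> vcl B \<Longrightarrow> vcl A \<subseteq> vcl B"
proof -
  assume "A \<subseteq> vcl B"
  hence "vcl A \<subseteq> vcl (vcl B)" by (rule vcl_mono)
  also have "\<dots> \<subseteq> vcl B" unfolding vcl_def[of "vcl B"] 
    using colon_anti[OF colon_vcl[of B]] by (simp add: vcl_def)
  finally show ?thesis .
qed
lemma vcl_0: "0 \<in> vcl A" unfolding vcl_def colon_def by simp
lemma vcl_add: "x \<in> vcl A \<Longrightarrow> y \<in> vcl A \<Longrightarrow> x + y \<in> vcl A"
  unfolding vcl_def colon_def by (auto simp: distrib_right Rset_add)
lemma vcl_Rmult: "r \<in> Rset \<Longrightarrow> x \<in> vcl A \<Longrightarrow> r * x \<in> vcl A"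
  unfolding vcl_def colon_def by (auto simp: Rset_mult mult.assoc mult.left_commute)
lemma vcl_in_R: "A \<subseteq> Rset \<Longrightarrow> vcl A \<subseteq> Rset"
proof
  fix x assume "A \<subseteq> Rset" "x \<in> vcl A"
  have "1 \<in> colon Rset A" using \<open>A \<subseteq> Rset\<close> unfolding colon_def by auto
  hence "x * 1 \<in> Rset" using \<open>x \<in> vcl A\<close> unfolding vcl_def colon_def by blast
  thus "x \<in> Rset" by simp
qed
lemma vcl_iff: "x \<in> vcl A \<longleftrightarrow> (\<forall>z. (\<forall>a\<in>A. z * a \<in> Rset) \<longrightarrow> z * x \<in> Rset)"
proof -
  have "x \<in> vcl A \<longleftrightarrow> (\<forall>z. (\<forall>a\<in>A. z * a \<in> Rset) \<longrightarrow> x * z \<in> Rset)"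
    unfolding vcl_def colon_def by blast
  thus ?thesis by (simp only: mult.commute[of x])
qed

lemma vcl_prod: "x \<in> vcl A \<Longrightarrow> y \<in> vcl B \<Longrightarrow> x * y \<in> vcl {a * b | a b. a \<in> A \<and> b \<in> B}"
proof -
  assume x: "x \<in> vcl A" and y: "y \<in> vcl B"
  show ?thesis unfolding vcl_iff
  proof (intro allI impI)
    fix z assume z: "\<forall>c\<in>{a * b |a b. a \<in> A \<and> b \<in> B}. z * c \<in> Rset"
    have "\<forall>a\<in>A. (z * y) * a \<in> Rset"
    proof
      fix a assume "a \<in> A"
      have "\<forall>b\<in>B. (z * a) * b \<in> Rset" using z \<open>a \<in> A\<close> by (auto simp: mult.assoc)
      hence "(z * a) * y \<in> Rset" using y unfolding vcl_iff by blast
      thus "z * y * a \<in> Rset" by (simp add: ac_simps)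
    qed
    hence "(z * y) * x \<in> Rset" using x unfolding vcl_iff by blast
    thus "z * (x * y) \<in> Rset" by (simp add: ac_simps)
  qed
qed
lemma vcl_RB: "vcl {r * b | r b. r \<in> Rset \<and> b \<in> B} \<subseteq> vcl (B::'a::idom fract set)"
proof -
  have "colon Rset B \<subseteq> colon Rset {r * b | r b. r \<in> Rset \<and> b \<in> B}"
  proof
    fix x assume x: "x \<in> colon Rset B"
    show "x \<in> colon Rset {r * b | r b. r \<in> Rset \<and> b \<in> B}" unfolding colon_def
    proof (clarify)
      fix r b :: "'a fract" assume "r \<in> Rset" "b \<in> B"
      hence "r * (x * b) \<in> Rset" using x unfolding colon_def by (blast intro: Rset_mult)
      thus "x * (r * b) \<in> Rset" by (simp add: ac_simps)
    qed
  qed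
  thus ?thesis unfolding vcl_def by (rule colon_anti)
qed
lemma vcl_scalar: "x \<in> vcl A \<Longrightarrow> s * x \<in> vcl ((*) s ` A)"
  unfolding vcl_def colon_def
proof (intro CollectI ballI)
  fix b assume x: "x \<in> {x. \<forall>b\<in>{x. \<forall>b\<in>A. x * b \<in> Rset}. x * b \<in> Rset}"
    and b: "b \<in> {x. \<forall>b\<in>(*) s ` A. x * b \<in> Rset}"
  have "b * s \<in> {x. \<forall>b\<in>A. x * b \<in> Rset}" using b by (auto simp: ac_simps)
  hence "x * (b * s) \<in> Rset" using x by blast
  thus "s * x * b \<in> Rset" by (simp add: ac_simps)
qed

lemma ideal_0: "is_ideal I \<Longrightarrow> 0 \<in> I" unfolding is_ideal_def by blast
lemma ideal_add: "is_ideal I \<Longrightarrow> x \<in> I \<Longrightarrow> y \<in> I \<Longrightarrow> x + y \<in> I" unfolding is_ideal_def by blast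
lemma ideal_multL: "is_ideal I \<Longrightarrow> x \<in> I \<Longrightarrow> r * x \<in> I" unfolding is_ideal_def by blast
lemma ideal_multR: "is_ideal I \<Longrightarrow> x \<in> I \<Longrightarrow> x * r \<in> I" unfolding is_ideal_def by (metis mult.commute)
lemma ideal_1: "is_ideal I \<Longrightarrow> 1 \<in> I \<Longrightarrow> I = UNIV" using ideal_multR[of I 1] by auto
lemma ideal_pow: "is_ideal I \<Longrightarrow> x \<in> I \<Longrightarrow> n > 0 \<Longrightarrow> x ^ n \<in> I"
  by (cases n) (auto simp: ideal_multR)
lemma emb_in_iff[simp]: "emb x \<in> emb ` M \<longleftrightarrow> x \<in> M"
  by (auto simp: emb_inj image_iff)

lemma tideal_vcl:
  assumes "is_t_ideal M" "finite F" "F \<subseteq> M"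
  shows "vcl (emb ` F) \<subseteq> emb ` M"
proof -
  obtain m where m: "m \<in> M" "m \<noteq> 0" using assms(1) unfolding is_t_ideal_def is_ideal_def by blast
  let ?F = "emb ` insert m F"
  have "vcl (emb ` F) \<subseteq> vcl ?F" by (intro vcl_mono) auto
  also have "\<dots> \<subseteq> tcl (emb ` M)" unfolding tcl_def
  proof (intro Union_upper CollectI exI conjI)
    show "vcl ?F = vcl ?F" ..
    show "finite ?F" "?F \<subseteq> emb ` M" "?F \<noteq> {}" using assms m by auto
    show "?F \<noteq> {0}" using m by auto
  qed
  also have "\<dots> = emb ` M" using assms(1) unfolding is_t_ideal_def by blast
  finally show ?thesis .
qed

lemma tcl_ge: assumes "a \<in> A" "a \<noteq> 0" shows "A \<subseteq> tcl A"
proof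
  fix x assume "x \<in> A"
  have "x \<in> vcl {x, a}" using vcl_ext by blast
  moreover have "vcl {x, a} \<in> {vcl F | F. finite F \<and> F \<subseteq> A \<and> F \<noteq> {} \<and> F \<noteq> {0}}"
    using assms \<open>x \<in> A\<close> by auto
  ultimately show "x \<in> tcl A" unfolding tcl_def by (rule UnionI[rotated])
qed

lemma t_idealI:
  assumes "is_ideal X" "x \<in> X" "x \<noteq> 0"
    and "\<And>F. finite F \<Longrightarrow> F \<subseteq> X \<Longrightarrow> vcl (emb ` F) \<subseteq> emb ` X"
  shows "is_t_ideal X"
  unfolding is_t_ideal_def
proof (intro conjI)
  show "X \<noteq> {0}" using assms by blast
  show "tcl (emb ` X) = emb ` X"
  proof
    show "emb ` X \<subseteq> tcl (emb ` X)" using assms by (intro tcl_ge[of "emb x"]) auto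
    show "tcl (emb ` X) \<subseteq> emb ` X" unfolding tcl_def
    proof clarify
      fix y G assume G: "y \<in> vcl G" "finite G" "G \<subseteq> emb ` X"
      define F where "F = emb -` G \<inter> X"
      have GF: "G = emb ` F" using G unfolding F_def by auto
      have "finite (emb -` G)" using G(2) by (rule finite_vimageI) (simp add: inj_on_def emb_inj)
      hence fF: "finite F" unfolding F_def by simp
      have FX: "F \<subseteq> X" unfolding F_def by simp
      show "y \<in> emb ` X" using assms(4)[OF fF FX] G(1) GF by blast
    qed
  qed
  show "is_ideal X" by fact
qed

definition Tgen :: "'a::idom set \<Rightarrow> 'a set" where
  "Tgen S = {x. \<exists>F. finite F \<and> F \<subseteq> S \<and> emb x \<in> vcl (emb ` F)}"

lemma Tgen_sub: "S \<subseteq> Tgen S"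
proof
  fix x assume x: "x \<in> S"
  have "emb x \<in> vcl (emb ` {x})" using vcl_ext by auto
  moreover have "finite {x}" "{x} \<subseteq> S" using x by auto
  ultimately show "x \<in> Tgen S" unfolding Tgen_def by blast
qed

lemma Tgen_ideal: "is_ideal (Tgen S)"
  unfolding is_ideal_def
proof (intro conjI allI ballI impI)
  have "emb 0 \<in> vcl (emb ` {})" using vcl_0 by simp
  thus "0 \<in> Tgen S" unfolding Tgen_def by blast
  fix x y assume "x \<in> Tgen S" "y \<in> Tgen S"
  then obtain F1 F2 where F: "finite F1" "F1 \<subseteq> S" "emb x \<in> vcl (emb ` F1)"
     "finite F2" "F2 \<subseteq> S" "emb y \<in> vcl (emb ` F2)" unfolding Tgen_def by blast
  have "vcl (emb ` F1) \<subseteq> vcl (emb ` (F1 \<union> F2))" "vcl (emb ` F2) \<subseteq> vcl (emb ` (F1 \<union> F2))"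
    by (intro vcl_mono; blast)+
  hence "emb x \<in> vcl (emb ` (F1 \<union> F2))" "emb y \<in> vcl (emb ` (F1 \<union> F2))"
    using F by blast+
  hence "emb (x + y) \<in> vcl (emb ` (F1 \<union> F2))" by (simp add: emb_add vcl_add)
  thus "x + y \<in> Tgen S" unfolding Tgen_def using F by blast
next
  fix r x assume "x \<in> Tgen S"
  then obtain F1 where F: "finite F1" "F1 \<subseteq> S" "emb x \<in> vcl (emb ` F1)" unfolding Tgen_def by blast
  hence "emb (r * x) \<in> vcl (emb ` F1)" by (simp add: emb_mult vcl_Rmult)
  thus "r * x \<in> Tgen S" unfolding Tgen_def using F by blast
qed

lemma Tgen_fin: 
  assumes "finite G" shows "G \<subseteq> emb ` Tgen S \<Longrightarrow> \<exists>F. finite F \<and> F \<subseteq> S \<and> G \<subseteq> vcl (emb ` F)"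
  using assms
proof (induction G rule: finite_induct)
  case empty have "finite {} \<and> {} \<subseteq> S \<and> {} \<subseteq> vcl (emb ` {})" by simp
  then show ?case by blast
next
  case (insert g G)
  have "G \<subseteq> emb ` Tgen S" using insert.prems by simp
  then obtain F where F: "finite F" "F \<subseteq> S" "G \<subseteq> vcl (emb ` F)" using insert.IH by blast
  have "g \<in> emb ` Tgen S" using insert.prems by simp
  then obtain x where "g = emb x" "x \<in> Tgen S" by blast
  then obtain F1 where F1: "finite F1" "F1 \<subseteq> S" "g \<in> vcl (emb ` F1)" unfolding Tgen_def by blast
  have "vcl (emb ` F) \<subseteq> vcl (emb ` (F \<union> F1))" "vcl (emb ` F1) \<subseteq> vcl (emb ` (F \<union> F1))"
    by (intro vcl_mono; blast)+
  hence "insert g G \<subseteq> vcl (emb ` (F \<union> F1))"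
    using F F1 by blast
  moreover have "finite (F \<union> F1)" "F \<union> F1 \<subseteq> S" using F F1 by auto
  ultimately show ?case by blast
qed

lemma Tgen_t: assumes "s \<in> S" "s \<noteq> 0" shows "is_t_ideal (Tgen S)"
proof (rule t_idealI[OF Tgen_ideal, of s])
  show "s \<in> Tgen S" using Tgen_sub assms by blast
  show "s \<noteq> 0" by fact
  fix F assume "finite F" "F \<subseteq> Tgen S"
  then obtain F1 where F1: "finite F1" "F1 \<subseteq> S" "emb ` F \<subseteq> vcl (emb ` F1)"
    using Tgen_fin[of "emb ` F" S] \<open>finite F\<close> \<open>F \<subseteq> Tgen S\<close> by blast
  have "vcl (emb ` F) \<subseteq> vcl (emb ` F1)" using F1 vcl_sub by blast
  moreover have "vcl (emb ` F1) \<subseteq> Rset" by (intro vcl_in_R) (auto)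
  ultimately show "vcl (emb ` F) \<subseteq> emb ` Tgen S" using F1 unfolding Rset_def Tgen_def by blast
qed

lemma t_max_exists:
  assumes "is_t_ideal T" "T \<noteq> UNIV"
  shows "\<exists>M. is_t_maximal M \<and> T \<subseteq> M"
proof -
  let ?A = "{N. is_t_ideal N \<and> N \<noteq> UNIV \<and> T \<subseteq> N}"
  have "\<exists>M\<in>?A. \<forall>X\<in>?A. M \<subseteq> X \<longrightarrow> X = M"
  proof (rule subset_Zorn_nonempty)
    show "?A \<noteq> {}" using assms by blast
    fix C assume C: "C \<noteq> {}" "subset.chain ?A C"
    hence Csub: "C \<subseteq> ?A" and Cch: "\<forall>X\<in>C. \<forall>Y\<in>C. X \<subseteq> Y \<or> Y \<subseteq> X"
      unfolding subset_chain_def by auto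
    obtain N0 where N0: "N0 \<in> C" using C by blast
    have T: "T \<subseteq> \<Union>C" using N0 Csub by blast
    obtain t where t: "t \<in> T" "t \<noteq> 0" using assms(1) unfolding is_t_ideal_def is_ideal_def by blast
    have ide: "is_ideal (\<Union>C)" unfolding is_ideal_def
    proof (intro conjI allI ballI impI)
      show "0 \<in> \<Union>C" using N0 Csub unfolding is_t_ideal_def is_ideal_def by blast
      fix x y assume "x \<in> \<Union>C" "y \<in> \<Union>C"
      then obtain X Y where "X \<in> C" "Y \<in> C" "x \<in> X" "y \<in> Y" by blast
      moreover have "is_ideal X" "is_ideal Y" using \<open>X \<in> C\<close> \<open>Y \<in> C\<close> Csub unfolding is_t_ideal_def by auto
      ultimately show "x + y \<in> \<Union>C"
      proof -
        assume h: "X \<in> C" "Y \<in> C" "x \<in> X" "y \<in> Y" "is_ideal X" "is_ideal Y"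
        show ?thesis
        proof (cases "X \<subseteq> Y")
          case True thus ?thesis using h ideal_add[of Y x y] by blast
        next
          case False hence "Y \<subseteq> X" using Cch h by blast
          thus ?thesis using h ideal_add[of X x y] by blast
        qed
      qed
    next
      fix r x assume "x \<in> \<Union>C"
      then obtain X where "X \<in> C" "x \<in> X" by blast
      moreover have "is_ideal X" using \<open>X \<in> C\<close> Csub unfolding is_t_ideal_def by auto
      ultimately show "r * x \<in> \<Union>C" using ideal_multL[of X x r] by blast
    qed
    have "is_t_ideal (\<Union>C)"
    proof (rule t_idealI[OF ide, of t])
      show "t \<in> \<Union>C" using T t by blast
      show "t \<noteq> 0" by fact
      fix F assume F: "finite F" "F \<subseteq> \<Union>C"
      show "vcl (emb ` F) \<subseteq> emb ` \<Union>C"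
      proof (cases "F = {}")
        case True
        have "vcl (emb ` F) \<subseteq> emb ` N0" using tideal_vcl[of N0 F] N0 Csub True by auto
        thus ?thesis using N0 by blast
      next
        case False
        then obtain B where "B \<in> C" "F \<subseteq> B" using finite_subset_Union_chain[OF F C(1) C(2)] by blast
        hence "vcl (emb ` F) \<subseteq> emb ` B" using tideal_vcl[of B F] F Csub by auto
        thus ?thesis using \<open>B \<in> C\<close> by blast
      qed
    qed
    moreover have "\<Union>C \<noteq> UNIV"
    proof
      assume "\<Union>C = UNIV"
      then obtain X where "X \<in> C" "1 \<in> X" by blast
      thus False using Csub ideal_1[of X] unfolding is_t_ideal_def by auto
    qed
    ultimately show "\<Union>C \<in> ?A" using T by blast
  qed
  then obtain M where M: "M \<in> ?A" "\<forall>X\<in>?A. M \<subseteq> X \<longrightarrow> X = M" by blast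
  hence "is_t_maximal M" unfolding is_t_maximal_def by auto
  thus ?thesis using M by blast
qed

lemma compact:
  assumes "s \<in> S" "s \<noteq> 0" "\<And>F. finite F \<Longrightarrow> F \<subseteq> S \<Longrightarrow> 1 \<notin> vcl (emb ` F)"
  shows "\<exists>M. is_t_maximal M \<and> S \<subseteq> M"
proof -
  have "1 \<notin> Tgen S" using assms(3) unfolding Tgen_def by auto
  hence "Tgen S \<noteq> UNIV" by blast
  then obtain M where "is_t_maximal M" "Tgen S \<subseteq> M" using t_max_exists Tgen_t[OF assms(1,2)] by blast
  thus ?thesis using Tgen_sub by blast
qed

lemma t_max_prime:
  assumes M: "is_t_maximal M"
  shows "is_prime_ideal M"
  unfolding is_prime_ideal_def
proof (intro conjI allI impI)
  have tM: "is_t_ideal M" using M unfolding is_t_maximal_def by blast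
  show "is_ideal M" "M \<noteq> UNIV" using M unfolding is_t_maximal_def is_t_ideal_def by auto
  fix a b assume ab: "a * b \<in> M"
  show "a \<in> M \<or> b \<in> M"
  proof (rule ccontr)
    assume nab: "\<not> (a \<in> M \<or> b \<in> M)"
    hence a: "a \<notin> M" by blast
    obtain m where m: "m \<in> M" "m \<noteq> 0" using tM unfolding is_t_ideal_def is_ideal_def by blast
    have tT: "is_t_ideal (Tgen (insert a M))" using m by (intro Tgen_t[of m]) auto
    have "M \<subseteq> Tgen (insert a M)" "a \<in> Tgen (insert a M)" using Tgen_sub[of "insert a M"] by auto
    hence "Tgen (insert a M) = UNIV" using M tT a unfolding is_t_maximal_def by blast
    hence "1 \<in> Tgen (insert a M)" by blast
    then obtain F where F: "finite F" "F \<subseteq> insert a M" "1 \<in> vcl (emb ` F)"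
      unfolding Tgen_def by auto
    have "emb b * 1 \<in> vcl ((*) (emb b) ` emb ` F)" using vcl_scalar F(3) by blast
    also have "(*) (emb b) ` emb ` F = emb ` ((*) b ` F)" by (simp add: image_image emb_mult)
    finally have "emb b \<in> vcl (emb ` ((*) b ` F))" by simp
    moreover have "(*) b ` F \<subseteq> M"
    proof
      fix y assume "y \<in> (*) b ` F"
      then obtain f where f: "f \<in> F" "y = b * f" by blast
      show "y \<in> M"
      proof (cases "f = a")
        case True thus ?thesis using f ab by (simp add: mult.commute)
      next
        case False hence "f \<in> M" using f F(2) by blast
        thus ?thesis using f ideal_multL[of M f b] tM unfolding is_t_ideal_def by blast
      qed
    qed
    ultimately have "emb b \<in> emb ` M" using tideal_vcl[OF tM, of "(*) b ` F"] F by blast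
    hence "b \<in> M" by simp
    thus False using nab by blast
  qed
qed

lemma chain_union_ideal:
  assumes "C \<noteq> {}" "\<forall>X\<in>C. is_ideal X" "\<forall>X\<in>C. \<forall>Y\<in>C. X \<subseteq> Y \<or> Y \<subseteq> X"
  shows "is_ideal (\<Union>C)"
  unfolding is_ideal_def
proof (intro conjI allI ballI impI)
  obtain N0 where N0: "N0 \<in> C" using assms by blast
  show "0 \<in> \<Union>C" using N0 assms(2) ideal_0 by blast
  fix x y assume "x \<in> \<Union>C" "y \<in> \<Union>C"
  then obtain X Y where h: "X \<in> C" "Y \<in> C" "x \<in> X" "y \<in> Y" by blast
  show "x + y \<in> \<Union>C"
  proof (cases "X \<subseteq> Y")
    case True thus ?thesis using h ideal_add[of Y x y] assms(2) by blast
  next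
    case False hence "Y \<subseteq> X" using assms(3) h by blast
    thus ?thesis using h ideal_add[of X x y] assms(2) by blast
  qed
next
  fix r x assume "x \<in> \<Union>C"
  then obtain X where "X \<in> C" "x \<in> X" by blast
  thus "r * x \<in> \<Union>C" using ideal_multL[of X x r] assms(2) by blast
qed

lemma prime_avoid:
  assumes I: "is_ideal I" and S1: "1 \<in> S" and Smul: "\<forall>a\<in>S. \<forall>b\<in>S. a * b \<in> S" and IS: "I \<inter> S = {}"
  shows "\<exists>Q. is_prime_ideal Q \<and> I \<subseteq> Q \<and> Q \<inter> S = {}"
proof -
  let ?A = "{J. is_ideal J \<and> I \<subseteq> J \<and> J \<inter> S = {}}"
  have "\<exists>M\<in>?A. \<forall>X\<in>?A. M \<subseteq> X \<longrightarrow> X = M"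
  proof (rule subset_Zorn_nonempty)
    show "?A \<noteq> {}" using I IS by blast
    fix C assume C: "C \<noteq> {}" "subset.chain ?A C"
    hence Csub: "C \<subseteq> ?A" and Cch: "\<forall>X\<in>C. \<forall>Y\<in>C. X \<subseteq> Y \<or> Y \<subseteq> X"
      unfolding subset_chain_def by auto
    have "is_ideal (\<Union>C)" using chain_union_ideal[OF C(1) _ Cch] Csub by blast
    moreover have "I \<subseteq> \<Union>C" using C(1) Csub by blast
    moreover have "\<Union>C \<inter> S = {}" using Csub by blast
    ultimately show "\<Union>C \<in> ?A" by blast
  qed
  then obtain Q where Q: "Q \<in> ?A" "\<forall>X\<in>?A. Q \<subseteq> X \<longrightarrow> X = Q" by blast
  have QI: "is_ideal Q" using Q by blast
  have "is_prime_ideal Q" unfolding is_prime_ideal_def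
  proof (intro conjI allI impI)
    show "is_ideal Q" by fact
    show "Q \<noteq> UNIV" using Q S1 by blast
    fix a b assume ab: "a * b \<in> Q"
    show "a \<in> Q \<or> b \<in> Q"
    proof (rule ccontr)
      assume "\<not> (a \<in> Q \<or> b \<in> Q)"
      hence na: "a \<notin> Q" and nb: "b \<notin> Q" by auto
      have ext: "\<exists>q\<in>Q. \<exists>r. q + r * c \<in> S" if c: "c \<notin> Q" for c
      proof (rule ccontr)
        assume no: "\<not> (\<exists>q\<in>Q. \<exists>r. q + r * c \<in> S)"
        let ?J = "{q + r * c | q r. q \<in> Q}"
        have "is_ideal ?J" unfolding is_ideal_def
        proof (intro conjI allI ballI impI)
          have "0 + 0 * c \<in> ?J" using ideal_0[OF QI] by blast
          thus "0 \<in> ?J" by simp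
          fix x y assume "x \<in> ?J" "y \<in> ?J"
          then obtain q1 r1 q2 r2 where h: "x = q1 + r1 * c" "q1 \<in> Q" "y = q2 + r2 * c" "q2 \<in> Q" by blast
          have "x + y = (q1 + q2) + (r1 + r2) * c" using h by (simp add: algebra_simps)
          moreover have "q1 + q2 \<in> Q" using h QI ideal_add by blast
          ultimately show "x + y \<in> ?J" by blast
        next
          fix r x assume "x \<in> ?J"
          then obtain q1 r1 where h: "x = q1 + r1 * c" "q1 \<in> Q" by blast
          have "r * x = r * q1 + (r * r1) * c" using h by (simp add: algebra_simps)
          moreover have "r * q1 \<in> Q" using h QI ideal_multL by blast
          ultimately show "r * x \<in> ?J" by blast
        qed
        moreover have "Q \<subseteq> ?J"
        proof
          fix q assume "q \<in> Q" hence "q + 0 * c \<in> ?J" by blast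
          thus "q \<in> ?J" by simp
        qed
        moreover have "?J \<inter> S = {}" using no by blast
        ultimately have "?J \<in> ?A" using Q by blast
        hence "?J = Q" using Q \<open>Q \<subseteq> ?J\<close> by blast
        moreover have "0 + 1 * c \<in> ?J" using ideal_0[OF QI] by blast
        ultimately show False using c by simp
      qed
      obtain q1 r1 where h1: "q1 \<in> Q" "q1 + r1 * a \<in> S" using ext[OF na] by blast
      obtain q2 r2 where h2: "q2 \<in> Q" "q2 + r2 * b \<in> S" using ext[OF nb] by blast
      have inS: "(q1 + r1 * a) * (q2 + r2 * b) \<in> S" using Smul h1 h2 by blast
      have eq: "(q1 + r1 * a) * (q2 + r2 * b) = q1 * (q2 + r2 * b) + (r1 * a) * q2 + (r1 * r2) * (a * b)"
        by (simp add: algebra_simps)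
      have "q1 * (q2 + r2 * b) \<in> Q" using h1 QI ideal_multR by blast
      moreover have "(r1 * a) * q2 \<in> Q" using h2 QI ideal_multL by blast
      moreover have "(r1 * r2) * (a * b) \<in> Q" using ab QI ideal_multL by blast
      ultimately have "(q1 + r1 * a) * (q2 + r2 * b) \<in> Q" unfolding eq using QI ideal_add by metis
      thus False using inS Q by blast
    qed
  qed
  thus ?thesis using Q by blast
qed

lemma compl_image_iff: "(X::'b set) \<in> uminus ` A \<longleftrightarrow> - X \<in> A"
proof
  assume "X \<in> uminus ` A" then obtain Y where "Y \<in> A" "X = - Y" by blast
  thus "- X \<in> A" by simp
next
  assume "- X \<in> A" hence "- (- X) \<in> uminus ` A" by (rule imageI)
  thus "X \<in> uminus ` A" by simp
qed

lemma prime_Inter_chain: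
  assumes D: "D \<noteq> {}" "\<forall>Q\<in>D. is_prime_ideal Q" "\<forall>X\<in>D. \<forall>Y\<in>D. X \<subseteq> Y \<or> Y \<subseteq> X"
  shows "is_prime_ideal (\<Inter>D)"
  unfolding is_prime_ideal_def
proof (intro conjI allI impI)
  obtain Q0 where Q0: "Q0 \<in> D" using D by blast
  have DI: "\<And>Q. Q \<in> D \<Longrightarrow> is_ideal Q" using D unfolding is_prime_ideal_def by blast
  show "is_ideal (\<Inter>D)" unfolding is_ideal_def
  proof (intro conjI allI ballI impI)
    show "0 \<in> \<Inter>D"
    proof (rule InterI)
      fix Q assume "Q \<in> D" thus "0 \<in> Q" using DI ideal_0 by blast
    qed
    fix x y assume xy: "x \<in> \<Inter>D" "y \<in> \<Inter>D"
    show "x + y \<in> \<Inter>D"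
    proof (rule InterI)
      fix Q assume Q: "Q \<in> D"
      hence "x \<in> Q" "y \<in> Q" using xy by blast+
      thus "x + y \<in> Q" using DI[OF Q] ideal_add by blast
    qed
  next
    fix r x assume x: "x \<in> \<Inter>D"
    show "r * x \<in> \<Inter>D"
    proof (rule InterI)
      fix Q assume Q: "Q \<in> D"
      hence "x \<in> Q" using x by blast
      thus "r * x \<in> Q" using DI[OF Q] ideal_multL by blast
    qed
  qed
  show "\<Inter>D \<noteq> UNIV"
  proof
    assume "\<Inter>D = UNIV"
    hence "1 \<in> Q0" using Q0 by blast
    hence "Q0 = UNIV" using DI[OF Q0] ideal_1 by blast
    thus False using Q0 D unfolding is_prime_ideal_def by blast
  qed
  fix a b assume ab: "a * b \<in> \<Inter>D"
  show "a \<in> \<Inter>D \<or> b \<in> \<Inter>D"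
  proof (rule ccontr)
    assume "\<not> (a \<in> \<Inter>D \<or> b \<in> \<Inter>D)"
    then obtain Q1 Q2 where q: "Q1 \<in> D" "a \<notin> Q1" "Q2 \<in> D" "b \<notin> Q2" by blast
    have p1: "is_prime_ideal Q1" and p2: "is_prime_ideal Q2" using q D by blast+
    show False
    proof (cases "Q1 \<subseteq> Q2")
      case True
      hence "b \<notin> Q1" using q by blast
      moreover have "a * b \<in> Q1" using ab q by blast
      ultimately show False using q p1 unfolding is_prime_ideal_def by blast
    next
      case False hence "Q2 \<subseteq> Q1" using D q by blast
      hence "a \<notin> Q2" using q by blast
      moreover have "a * b \<in> Q2" using ab q by blast
      ultimately show False using q p2 unfolding is_prime_ideal_def by blast
    qed
  qed
qed

lemma min_prime_below:
  assumes P: "is_prime_ideal P" "I \<subseteq> P"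
  shows "\<exists>Q\<in>minimal_primes I. Q \<subseteq> P"
proof -
  define A where "A = {Q. is_prime_ideal Q \<and> I \<subseteq> Q \<and> Q \<subseteq> P}"
  have "\<exists>M\<in>uminus ` A. \<forall>X\<in>uminus ` A. M \<subseteq> X \<longrightarrow> X = M"
  proof (rule subset_Zorn_nonempty)
    have "P \<in> A" using P unfolding A_def by blast
    thus "uminus ` A \<noteq> {}" by blast
    fix C assume C: "C \<noteq> {}" "subset.chain (uminus ` A) C"
    hence Csub: "C \<subseteq> uminus ` A" and Cch: "\<forall>X\<in>C. \<forall>Y\<in>C. X \<subseteq> Y \<or> Y \<subseteq> X"
      unfolding subset_chain_def by auto
    define D where "D = uminus ` C"
    have DA: "\<forall>Q\<in>D. Q \<in> A"
    proof
      fix Q assume "Q \<in> D"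
      then obtain X where X: "X \<in> C" "Q = - X" unfolding D_def by blast
      hence "X \<in> uminus ` A" using Csub by blast
      thus "Q \<in> A" using X compl_image_iff by blast
    qed
    have Dch: "\<forall>X\<in>D. \<forall>Y\<in>D. X \<subseteq> Y \<or> Y \<subseteq> X"
    proof (intro ballI)
      fix X Y assume "X \<in> D" "Y \<in> D"
      then obtain X' Y' where "X' \<in> C" "Y' \<in> C" "X = - X'" "Y = - Y'" unfolding D_def by blast
      thus "X \<subseteq> Y \<or> Y \<subseteq> X" using Cch by blast
    qed
    have Dne: "D \<noteq> {}" using C(1) unfolding D_def by blast
    have "is_prime_ideal (\<Inter>D)" using prime_Inter_chain[OF Dne _ Dch] DA unfolding A_def by blast
    moreover have "I \<subseteq> \<Inter>D" using DA unfolding A_def by blast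
    moreover have "\<Inter>D \<subseteq> P" using DA Dne unfolding A_def by blast
    ultimately have "\<Inter>D \<in> A" unfolding A_def by blast
    moreover have "- \<Union>C = \<Inter>D" unfolding D_def by blast
    ultimately have "- \<Union>C \<in> A" by simp
    thus "\<Union>C \<in> uminus ` A" using compl_image_iff by blast
  qed
  then obtain M where M: "M \<in> uminus ` A" "\<forall>X\<in>uminus ` A. M \<subseteq> X \<longrightarrow> X = M" by blast
  define Q where "Q = - M"
  have QA: "Q \<in> A" using M(1) compl_image_iff unfolding Q_def by blast
  hence Q: "is_prime_ideal Q" "I \<subseteq> Q" "Q \<subseteq> P" unfolding A_def by blast+
  have "Q \<in> minimal_primes I" unfolding minimal_primes_def
  proof (intro CollectI conjI allI impI)
    show "is_prime_ideal Q" "I \<subseteq> Q" by fact+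
    fix Q' assume Q': "is_prime_ideal Q' \<and> I \<subseteq> Q' \<and> Q' \<subseteq> Q"
    hence "Q' \<in> A" using Q unfolding A_def by blast
    hence "- Q' \<in> uminus ` A" by (rule imageI)
    moreover have "M \<subseteq> - Q'" using Q' unfolding Q_def by blast
    ultimately have "- Q' = M" using M(2) by blast
    thus "Q' = Q" unfolding Q_def by auto
  qed
  thus ?thesis using Q by blast
qed

lemma loc_helper:
  assumes "Fract a b \<in> localization M" "b \<noteq> 0" "is_prime_ideal P" "b \<in> P" "P \<subseteq> M"
  shows "a \<in> P"
proof -
  obtain c s where cs: "Fract a b = Fract c s" "s \<notin> M" using assms(1) unfolding localization_def by blast
  have "0 \<in> M" using assms(3,5) ideal_0 unfolding is_prime_ideal_def by blast
  hence s0: "s \<noteq> 0" using cs by blast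
  have "a * s = c * b" using cs(1) eq_fract(1)[OF assms(2) s0] by blast
  moreover have "c * b \<in> P" using assms(3,4) ideal_multL unfolding is_prime_ideal_def by blast
  ultimately have "a * s \<in> P" by simp
  hence "a \<in> P \<or> s \<in> P" using assms(3) unfolding is_prime_ideal_def by blast
  thus ?thesis using cs assms(5) by blast
qed

lemma chain_tmax:
  assumes pv: "PvMD TYPE('a::idom)" and M: "is_t_maximal (M::'a set)"
    and P1: "is_prime_ideal P1" "P1 \<subseteq> M" and P2: "is_prime_ideal P2" "P2 \<subseteq> M"
  shows "P1 \<subseteq> P2 \<or> P2 \<subseteq> P1"
proof (rule ccontr)
  assume "\<not> (P1 \<subseteq> P2 \<or> P2 \<subseteq> P1)"
  then obtain a b where ab: "a \<in> P1" "a \<notin> P2" "b \<in> P2" "b \<notin> P1" by blast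
  have a0: "a \<noteq> 0" using ab P2 ideal_0 unfolding is_prime_ideal_def by blast
  have b0: "b \<noteq> 0" using ab P1 ideal_0 unfolding is_prime_ideal_def by blast
  have val: "valuation_subring (localization M)" using pv M unfolding PvMD_def by blast
  have "Fract a b \<noteq> 0" using a0 b0 by (simp add: Zero_fract_def eq_fract)
  hence "Fract a b \<in> localization M \<or> Fract b a \<in> localization M"
    using val unfolding valuation_subring_def by (metis inverse_fract)
  thus False
  proof
    assume "Fract a b \<in> localization M"
    hence "a \<in> P2" using loc_helper[OF _ b0 P2(1) ab(3) P2(2)] by blast
    thus False using ab by blast
  next
    assume "Fract b a \<in> localization M"
    hence "b \<in> P1" using loc_helper[OF _ a0 P1(1) ab(1) P1(2)] by blast
    thus False using ab by blast
  qed
qed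

lemma prime_pow: "is_prime_ideal M \<Longrightarrow> x ^ n \<in> M \<Longrightarrow> x \<in> M"
proof (induct n)
  case 0 thus ?case using ideal_1 unfolding is_prime_ideal_def by auto
next
  case (Suc n) thus ?case unfolding is_prime_ideal_def by auto
qed

lemma power_avoid:
  assumes I: "is_ideal I" and M: "is_prime_ideal M" "I \<subseteq> M"
    and no: "\<not> (\<exists>s n. s \<notin> M \<and> s * x ^ n \<in> I)"
  shows "\<exists>Q. is_prime_ideal Q \<and> I \<subseteq> Q \<and> Q \<subseteq> M \<and> x \<notin> Q"
proof -
  let ?S = "{s * x ^ n | s n. s \<notin> M}"
  have "1 \<notin> M" using M ideal_1 unfolding is_prime_ideal_def by blast
  hence "1 * x ^ 0 \<in> ?S" by blast
  hence S1: "1 \<in> ?S" by simp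
  have Smul: "\<forall>a\<in>?S. \<forall>b\<in>?S. a * b \<in> ?S"
  proof (intro ballI)
    fix a b assume "a \<in> ?S" "b \<in> ?S"
    then obtain s n t m where h: "a = s * x ^ n" "s \<notin> M" "b = t * x ^ m" "t \<notin> M" by blast
    have "s * t \<notin> M" using h M unfolding is_prime_ideal_def by blast
    moreover have "a * b = (s * t) * x ^ (n + m)" using h by (simp add: power_add algebra_simps)
    ultimately show "a * b \<in> ?S" by blast
  qed
  have "I \<inter> ?S = {}" using no by blast
  then obtain Q where Q: "is_prime_ideal Q" "I \<subseteq> Q" "Q \<inter> ?S = {}" using prime_avoid[OF I S1 Smul] by blast
  have "Q \<subseteq> M"
  proof
    fix q assume "q \<in> Q"
    show "q \<in> M"
    proof (rule ccontr)
      assume "q \<notin> M" hence "q * x ^ 0 \<in> ?S" by blast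
      thus False using Q \<open>q \<in> Q\<close> by auto
    qed
  qed
  moreover have "x \<notin> Q"
  proof
    assume "x \<in> Q" have "1 * x ^ 1 \<in> ?S" using \<open>1 \<notin> M\<close> by blast
    thus False using Q \<open>x \<in> Q\<close> by auto
  qed
  ultimately show ?thesis using Q by blast
qed

lemma pow_combine:
  assumes M: "is_prime_ideal M" and I: "is_ideal I" and fin: "finite F"
    and h: "\<forall>x\<in>F. \<exists>s n. s \<notin> M \<and> s * x ^ n \<in> I"
  shows "\<exists>s n. s \<notin> M \<and> (\<forall>x\<in>F. s * x ^ n \<in> I)"
  using fin h
proof (induction F rule: finite_induct)
  case empty
  have "1 \<notin> M" using M ideal_1 unfolding is_prime_ideal_def by blast
  thus ?case by blast
next
  case (insert y F)
  obtain s n where s: "s \<notin> M" "\<forall>x\<in>F. s * x ^ n \<in> I" using insert by blast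
  obtain t m where t: "t \<notin> M" "t * y ^ m \<in> I" using insert.prems by blast
  have st: "s * t \<notin> M" using s t M unfolding is_prime_ideal_def by blast
  have "\<forall>x\<in>insert y F. (s * t) * x ^ (n + m) \<in> I"
  proof
    fix x assume "x \<in> insert y F"
    thus "(s * t) * x ^ (n + m) \<in> I"
    proof
      assume "x = y"
      have "(s * t) * x ^ (n + m) = (s * x ^ n) * (t * y ^ m)" using \<open>x = y\<close> by (simp add: power_add algebra_simps)
      thus ?thesis using t I ideal_multL by metis
    next
      assume "x \<in> F"
      have "(s * t) * x ^ (n + m) = (s * x ^ n) * (t * x ^ m)" by (simp add: power_add algebra_simps)
      thus ?thesis using s \<open>x \<in> F\<close> I ideal_multR by metis
    qed
  qed
  thus ?case using st by blast
qed

lemma Rset_pow: "a \<in> Rset \<Longrightarrow> a ^ n \<in> Rset"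
  by (induct n) (auto intro: Rset_mult)

lemma pow_one:
  assumes A: "A \<subseteq> Rset" and a: "a \<in> Rset" and one: "1 \<in> vcl (insert a A)"
  shows "1 \<in> vcl (insert (a ^ N) A)"
proof (induct N)
  case 0 have "insert 1 A \<subseteq> vcl (insert 1 A)" by (rule vcl_ext)
  thus ?case by simp
next
  case (Suc N)
  have m1: "1 * 1 \<in> vcl {x * y | x y. x \<in> insert (a ^ N) A \<and> y \<in> insert a A}"
    using vcl_prod[OF Suc one] .
  have m2: "{x * y | x y. x \<in> insert (a ^ N) A \<and> y \<in> insert a A}
      \<subseteq> {r * b | r b. r \<in> Rset \<and> b \<in> insert (a ^ Suc N) A}"
  proof clarify
    fix x y assume x: "x \<in> insert (a ^ N) A" and y: "y \<in> insert a A"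
    show "\<exists>r b. x * y = r * b \<and> r \<in> Rset \<and> b \<in> insert (a ^ Suc N) A"
    proof (cases "x = a ^ N")
      case True
      show ?thesis
      proof (cases "y = a")
        case True
        have "x * y = 1 * a ^ Suc N" using \<open>x = a ^ N\<close> True by (simp add: power_Suc2)
        moreover have "(1::'a fract) \<in> Rset" by simp
        moreover have "a ^ Suc N \<in> insert (a ^ Suc N) A" by simp
        ultimately show ?thesis by blast
      next
        case False hence "y \<in> A" using y by blast
        thus ?thesis using \<open>x = a ^ N\<close> Rset_pow[OF a] by blast
      qed
    next
      case False hence xA: "x \<in> A" using x by blast
      show ?thesis
      proof (cases "y = a")
        case True
        have "x * y = a * x" using True by (simp add: mult.commute)
        thus ?thesis using a xA by blast
      next
        case False hence "y \<in> A" using y by blast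
        have "x * y = y * x" by (simp add: mult.commute)
        thus ?thesis using xA \<open>y \<in> A\<close> A by blast
      qed
    qed
  qed
  have "1 \<in> vcl {r * b | r b. r \<in> Rset \<and> b \<in> insert (a ^ Suc N) A}"
    using vcl_mono[OF m2] m1 by (simp add: subsetD)
  thus ?case using vcl_RB by blast
qed

lemma pow_all:
  assumes "finite G"
  shows "\<And>H. H \<subseteq> Rset \<Longrightarrow> 1 \<in> vcl (emb ` G \<union> H) \<Longrightarrow> 1 \<in> vcl (emb ` ((\<lambda>x. x ^ N) ` G) \<union> H)"
  using assms
proof (induction G rule: finite_induct)
  case empty thus ?case by simp
next
  case (insert g G)
  have "emb ` insert g G \<union> H = insert (emb g) (emb ` G \<union> H)" by simp
  hence o1: "1 \<in> vcl (insert (emb g) (emb ` G \<union> H))" using insert.prems by simp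
  have "emb ` G \<union> H \<subseteq> Rset" using insert.prems(1) unfolding Rset_def by blast
  hence "1 \<in> vcl (insert (emb g ^ N) (emb ` G \<union> H))" using pow_one[OF _ _ o1] by simp
  also have "insert (emb g ^ N) (emb ` G \<union> H) = emb ` G \<union> insert (emb (g ^ N)) H"
    by (auto simp: emb_pow)
  finally have "1 \<in> vcl (emb ` G \<union> insert (emb (g ^ N)) H)" .
  hence "1 \<in> vcl (emb ` ((\<lambda>x. x ^ N) ` G) \<union> insert (emb (g ^ N)) H)"
    using insert.IH[of "insert (emb (g ^ N)) H"] insert.prems by auto
  also have "emb ` ((\<lambda>x. x ^ N) ` G) \<union> insert (emb (g ^ N)) H = emb ` ((\<lambda>x. x ^ N) ` insert g G) \<union> H"
    by auto
  finally show ?case .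
qed

lemma minimal_eq: "P \<in> minimal_primes I \<Longrightarrow> Q \<in> minimal_primes I \<Longrightarrow> P \<subseteq> Q \<Longrightarrow> P = Q"
  unfolding minimal_primes_def by blast

lemma min_pow:
  assumes I: "is_ideal I" and Q: "Q \<in> minimal_primes I" and x: "x \<in> Q"
  shows "\<exists>s n. s \<notin> Q \<and> s * x ^ n \<in> I"
proof (rule ccontr)
  assume no: "\<not> (\<exists>s n. s \<notin> Q \<and> s * x ^ n \<in> I)"
  have Qp: "is_prime_ideal Q" "I \<subseteq> Q" using Q unfolding minimal_primes_def by blast+
  obtain Q' where Q': "is_prime_ideal Q'" "I \<subseteq> Q'" "Q' \<subseteq> Q" "x \<notin> Q'"
    using power_avoid[OF I Qp no] by blast
  hence "Q' = Q" using Q unfolding minimal_primes_def by blast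
  thus False using Q' x by blast
qed

lemma min_unique_tmax:
  assumes pv: "PvMD TYPE('a::idom)" and M: "is_t_maximal (M::'a set)"
    and P: "P \<in> minimal_primes I" "P \<subseteq> M" and Q: "Q \<in> minimal_primes I" "Q \<subseteq> M"
  shows "P = Q"
proof -
  have "is_prime_ideal P" "is_prime_ideal Q" using P Q unfolding minimal_primes_def by blast+
  hence "P \<subseteq> Q \<or> Q \<subseteq> P" using chain_tmax[OF pv M] P Q by blast
  thus ?thesis using minimal_eq[OF P(1) Q(1)] minimal_eq[OF Q(1) P(1)] by blast
qed

lemma tmax_pow:
  assumes pv: "PvMD TYPE('a::idom)" and M: "is_t_maximal (M::'a set)" and I: "is_ideal I"
    and P: "P \<in> minimal_primes I" "P \<subseteq> M" and x: "x \<in> P"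
  shows "\<exists>s n. s \<notin> M \<and> s * x ^ n \<in> I"
proof (rule ccontr)
  assume no: "\<not> (\<exists>s n. s \<notin> M \<and> s * x ^ n \<in> I)"
  have Mp: "is_prime_ideal M" using t_max_prime[OF M] .
  have IM: "I \<subseteq> M" using P unfolding minimal_primes_def by blast
  obtain Q' where Q': "is_prime_ideal Q'" "I \<subseteq> Q'" "Q' \<subseteq> M" "x \<notin> Q'"
    using power_avoid[OF I Mp IM no] by blast
  obtain P' where P': "P' \<in> minimal_primes I" "P' \<subseteq> Q'" using min_prime_below[OF Q'(1,2)] by blast
  have "P' = P" using min_unique_tmax[OF pv M P'(1) _ P] P' Q' by blast
  thus False using P' Q' x by blast
qed

lemma min_in_tmax:
  assumes tI: "is_t_ideal I" and Q: "Q \<in> minimal_primes I"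
  shows "\<exists>M. is_t_maximal M \<and> Q \<subseteq> M"
proof -
  have I: "is_ideal I" using tI unfolding is_t_ideal_def by blast
  have IQ: "I \<subseteq> Q" and Qp: "is_prime_ideal Q" using Q unfolding minimal_primes_def by blast+
  obtain i where i: "i \<in> I" "i \<noteq> 0" using tI unfolding is_t_ideal_def is_ideal_def by blast
  show ?thesis
  proof (rule compact[of i Q])
    show "i \<in> Q" using i IQ by blast
    show "i \<noteq> 0" by fact
    fix G assume G: "finite G" "G \<subseteq> Q"
    show "1 \<notin> vcl (emb ` G)"
    proof
      assume one: "1 \<in> vcl (emb ` G)"
      have "\<forall>x\<in>G. \<exists>s n. s \<notin> Q \<and> s * x ^ n \<in> I" using min_pow[OF I Q] G by blast
      then obtain s N where sN: "s \<notin> Q" "\<forall>x\<in>G. s * x ^ N \<in> I"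
        using pow_combine[OF Qp I G(1)] by blast
      have "1 \<in> vcl (emb ` ((\<lambda>x. x ^ N) ` G) \<union> {})"
        using pow_all[OF G(1), of "{}" N] one by simp
      hence o1: "1 \<in> vcl (emb ` ((\<lambda>x. x ^ N) ` G))" by simp
      have "emb s * 1 \<in> vcl ((*) (emb s) ` (emb ` ((\<lambda>x. x ^ N) ` G)))"
        by (rule vcl_scalar[OF o1])
      also have "(*) (emb s) ` (emb ` ((\<lambda>x. x ^ N) ` G)) = emb ` ((\<lambda>x. s * x ^ N) ` G)"
        by (simp add: image_image emb_mult emb_pow)
      finally have "emb s \<in> vcl (emb ` ((\<lambda>x. s * x ^ N) ` G))" by simp
      moreover have "vcl (emb ` ((\<lambda>x. s * x ^ N) ` G)) \<subseteq> emb ` I"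
        using tideal_vcl[OF tI, of "(\<lambda>x. s * x ^ N) ` G"] G sN by blast
      ultimately have "emb s \<in> emb ` I" by blast
      hence "s \<in> I" by simp
      thus False using sN IQ by blast
    qed
  qed
qed

theorem proposition1p4:
  fixes I :: "'a::idom set"
  assumes notfield: "\<exists>x::'a fract. x \<notin> Rset"
    and pvmd: "PvMD TYPE('a)"
    and tI: "is_t_ideal I"
    and proper: "I \<noteq> UNIV"
    and hyp: "\<forall>P\<in>minimal_primes I. rad_of_v_finite P"
  shows "finite (minimal_primes I)"
proof -
  define Mn where "Mn = minimal_primes I"
  have I: "is_ideal I" using tI unfolding is_t_ideal_def by blast
  obtain i where i: "i \<in> I" "i \<noteq> 0" using tI unfolding is_t_ideal_def is_ideal_def by blast
  have h: "\<forall>P\<in>Mn. \<exists>F. finite F \<and> F \<noteq> {} \<and> F \<noteq> {0} \<and> P = radical (emb -` vcl (emb ` F))"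
  proof
    fix P assume "P \<in> Mn"
    hence "rad_of_v_finite P" using hyp unfolding Mn_def by blast
    thus "\<exists>F. finite F \<and> F \<noteq> {} \<and> F \<noteq> {0} \<and> P = radical (emb -` vcl (emb ` F))"
      unfolding rad_of_v_finite_def .
  qed
  from bchoice[OF h] obtain F where F: "\<forall>P\<in>Mn. finite (F P) \<and> F P \<noteq> {} \<and> F P \<noteq> {0} \<and> P = radical (emb -` vcl (emb ` F P))"
    by (elim exE)
  have Ffin: "finite (F P)" if "P \<in> Mn" for P using F that by blast
  have Frad: "radical (emb -` vcl (emb ` F P)) = P" if "P \<in> Mn" for P using F that by simp
  have FsubP: "F P \<subseteq> P" if P: "P \<in> Mn" for P
  proof
    fix x assume "x \<in> F P"
    hence "emb x \<in> vcl (emb ` F P)" using vcl_ext by blast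
    hence "x ^ 1 \<in> emb -` vcl (emb ` F P)" by simp
    hence "x \<in> radical (emb -` vcl (emb ` F P))" unfolding radical_def by blast
    thus "x \<in> P" using Frad[OF P] by simp
  qed
  have Ftmax: "P \<subseteq> M" if P: "P \<in> Mn" and M: "is_t_maximal M" and FM: "F P \<subseteq> M" for P M
  proof
    fix x assume "x \<in> P"
    hence "x \<in> radical (emb -` vcl (emb ` F P))" using Frad[OF P] by simp
    then obtain n where "emb (x ^ n) \<in> vcl (emb ` F P)" unfolding radical_def by auto
    moreover have "vcl (emb ` F P) \<subseteq> emb ` M"
      using tideal_vcl[of M "F P"] M Ffin[OF P] FM unfolding is_t_maximal_def by blast
    ultimately have "emb (x ^ n) \<in> emb ` M" by blast
    hence "x ^ n \<in> M" by simp
    thus "x \<in> M" using prime_pow t_max_prime[OF M] by blast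
  qed
  define B where "B P = {r. \<exists>n. \<forall>x\<in>F P. r * x ^ n \<in> I}" for P
  define S where "S = I \<union> \<Union>(B ` Mn)"
  have "\<exists>G. finite G \<and> G \<subseteq> S \<and> 1 \<in> vcl (emb ` G)"
  proof (rule ccontr)
    assume no: "\<not> (\<exists>G. finite G \<and> G \<subseteq> S \<and> 1 \<in> vcl (emb ` G))"
    have "i \<in> S" using i unfolding S_def by blast
    have "\<And>G. finite G \<Longrightarrow> G \<subseteq> S \<Longrightarrow> 1 \<notin> vcl (emb ` G)" using no by blast
    then obtain M where M: "is_t_maximal M" "S \<subseteq> M" using compact[of i S] i \<open>i \<in> S\<close> by blast
    have Mp: "is_prime_ideal M" using t_max_prime[OF M(1)] .
    have IM: "I \<subseteq> M" using M unfolding S_def by blast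
    obtain P where P: "P \<in> minimal_primes I" "P \<subseteq> M" using min_prime_below[OF Mp IM] by blast
    have PM: "P \<in> Mn" using P unfolding Mn_def by blast
    have "\<forall>x\<in>F P. \<exists>s n. s \<notin> M \<and> s * x ^ n \<in> I"
      using tmax_pow[OF pvmd M(1) I P] FsubP[OF PM] by blast
    then obtain s n where sn: "s \<notin> M" "\<forall>x\<in>F P. s * x ^ n \<in> I"
      using pow_combine[OF Mp I Ffin[OF PM]] by blast
    have "s \<in> B P" unfolding B_def using sn by blast
    hence "s \<in> S" unfolding S_def using PM by blast
    thus False using M sn by blast
  qed
  then obtain G where G: "finite G" "G \<subseteq> S" "1 \<in> vcl (emb ` G)" by blast
  have "G - I \<subseteq> \<Union>(B ` Mn)" using G unfolding S_def by blast
  then obtain FF where FF: "finite FF" "FF \<subseteq> B ` Mn" "G - I \<subseteq> \<Union>FF"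
    using finite_subset_Union[of "G - I" "B ` Mn"] G(1) by blast
  then obtain Pf where Pf: "Pf \<subseteq> Mn" "finite Pf" "FF = B ` Pf"
    using finite_subset_image[of FF B Mn] by blast
  have GPf: "G \<subseteq> I \<union> \<Union>(B ` Pf)" using FF Pf by blast
  have "Mn \<subseteq> Pf"
  proof
    fix Q assume QM: "Q \<in> Mn"
    show "Q \<in> Pf"
    proof (rule ccontr)
      assume QP: "Q \<notin> Pf"
      have Qm: "Q \<in> minimal_primes I" using QM unfolding Mn_def .
      obtain M where M: "is_t_maximal M" "Q \<subseteq> M" using min_in_tmax[OF tI Qm] by blast
      have Mp: "is_prime_ideal M" using t_max_prime[OF M(1)] .
      have IM: "I \<subseteq> M" using M Qm unfolding minimal_primes_def by blast
      have "B P \<subseteq> M" if PP: "P \<in> Pf" for P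
      proof
        fix r assume r: "r \<in> B P"
        have PM: "P \<in> Mn" using PP Pf by blast
        have "\<not> F P \<subseteq> M"
        proof
          assume "F P \<subseteq> M"
          hence "P \<subseteq> M" using Ftmax[OF PM M(1)] by blast
          hence "P = Q" using min_unique_tmax[OF pvmd M(1), of P I Q] PM Qm M unfolding Mn_def by blast
          thus False using PP QP by blast
        qed
        then obtain x where x: "x \<in> F P" "x \<notin> M" by blast
        obtain n where "\<forall>x\<in>F P. r * x ^ n \<in> I" using r unfolding B_def by blast
        hence "r * x ^ n \<in> M" using x IM by blast
        moreover have "x ^ n \<notin> M" using x prime_pow[OF Mp] by blast
        ultimately show "r \<in> M" using Mp unfolding is_prime_ideal_def by blast
      qed
      hence "G \<subseteq> M" using GPf IM by blast
      hence "vcl (emb ` G) \<subseteq> emb ` M"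
        using tideal_vcl[of M G] M G unfolding is_t_maximal_def by blast
      hence "1 \<in> M" using G(3) by (metis emb_1 emb_in_iff subsetD)
      hence "M = UNIV" using ideal_1 Mp unfolding is_prime_ideal_def by blast
      thus False using M unfolding is_t_maximal_def by blast
    qed
  qed
  thus ?thesis using Pf finite_subset unfolding Mn_def by blast
qed

end
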